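(* For $0<\lambda<1$ let $Z(\lambda):=\big\{\frac{1-\lambda^j}{1+\lambda^j}:j=1,2,\dots\big\}$. Then \[ \delta(Z(\lambda))\ge e^{-(\pi^2/2)/(1-\lambda)}. \]
   Context: For a sequence $Z=(z_j)$ in $\mathbb{D}$, $\delta(Z):=\inf_j\prod_{k\ne j}\varrho(z_j,z_k)$, where $\varrho(z,w)=\big|\frac{z-w}{1-\bar wz}\big|$ is the pseudohyperbolic distance. *)

theory Defs
  imports Complex_Main
begin

definition pdist :: "complex \<Rightarrow> complex \<Rightarrow> real" where
  "pdist z w = cmod ((z - w) / (1 - cnj w * z))"

text \<open>The infinite product over k different from j of pdist (z j) (z k), taken as the
  limit of its partial products (the factors lie in [0,1], so the partial products are
  non-increasing and the limit exists, possibly 0).\<close>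
definition sep_prod :: "(nat \<Rightarrow> complex) \<Rightarrow> nat \<Rightarrow> real" where
  "sep_prod z j = lim (\<lambda>n. \<Prod>k\<in>{..<n} - {j}. pdist (z j) (z k))"

definition sep_const :: "(nat \<Rightarrow> complex) \<Rightarrow> real" where
  "sep_const z = (INF j. sep_prod z j)"

end

theory Submission
  imports Defs "HOL-Analysis.Analysis"
begin

lemma odd_sq_sums: "(\<lambda>n. 1 / (2 * real n + 1)\<^sup>2) sums (pi\<^sup>2 / 8)"
proof -
  have g: "(\<lambda>n. sum (\<lambda>n. 1 / (real n + 1)\<^sup>2) {n * 2 ..< n * 2 + 2}) sums (pi\<^sup>2 / 6)"
    using sums_group[OF inverse_squares_sums, of 2] by (simp add: ac_simps)
  have e: "(\<lambda>n. 1/4 * (1 / (real n + 1)\<^sup>2)) sums (1/4 * (pi\<^sup>2 / 6))"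
    using sums_mult[OF inverse_squares_sums, of "1/4"] by (simp add: ac_simps)
  have "(\<lambda>n. sum (\<lambda>n. 1 / (real n + 1)\<^sup>2) {n * 2 ..< n * 2 + 2} - 1/4 * (1 / (real n + 1)\<^sup>2))
        sums (pi\<^sup>2 / 6 - 1/4 * (pi\<^sup>2 / 6))"
    by (rule sums_diff[OF g e])
  moreover have "\<And>n. sum (\<lambda>n. 1 / (real n + 1)\<^sup>2) {n * 2 ..< n * 2 + 2} - 1/4 * (1 / (real n + 1)\<^sup>2)
      = 1 / (2 * real n + 1)\<^sup>2"
  proof -
    fix n :: nat
    have "{n * 2 ..< n * 2 + 2} = {n*2, n*2+1}" by auto
    then show "sum (\<lambda>n. 1 / (real n + 1)\<^sup>2) {n * 2 ..< n * 2 + 2} - 1/4 * (1 / (real n + 1)\<^sup>2)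
      = 1 / (2 * real n + 1)\<^sup>2"
      by (simp add: field_simps power2_eq_square)
  qed
  ultimately show ?thesis by simp
qed

lemma geom_bound:
  fixes q :: real assumes "0 \<le> q" "q < 1"
  shows "(\<Sum>m\<in>{1..N}. q ^ m) \<le> q / (1 - q)"
proof -
  have "(\<Sum>m\<in>{1..N}. q ^ m) * (1 - q) = q - q ^ Suc N"
  proof (induction N)
    case (Suc N)
    have "(\<Sum>m\<in>{1..Suc N}. q ^ m) = (\<Sum>m\<in>{1..N}. q ^ m) + q ^ Suc N"
      by (simp add: atLeastAtMostSuc_conv)
    then have "(\<Sum>m\<in>{1..Suc N}. q ^ m) * (1 - q) = (\<Sum>m\<in>{1..N}. q ^ m) * (1 - q) + q ^ Suc N * (1 - q)"
      by (simp add: algebra_simps)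
    also have "\<dots> = q - q ^ Suc (Suc N)" using Suc by (simp add: algebra_simps)
    finally show ?case .
  qed simp
  moreover have "0 \<le> q ^ Suc N" using assms by simp
  ultimately have "(\<Sum>m\<in>{1..N}. q ^ m) * (1 - q) \<le> q" by linarith
  then show ?thesis using assms by (simp add: field_simps)
qed

lemma pow_bound:
  fixes l :: real assumes "0 < l" "l < 1" "0 < k"
  shows "l ^ k / (1 - l ^ k) \<le> 1 / (real k * (1 - l))"
proof -
  have "(\<Sum>i<k. l ^ k) \<le> (\<Sum>i<k. l ^ i)"
    by (rule sum_mono) (use assms in \<open>auto intro: power_decreasing\<close>)
  then have "real k * l ^ k \<le> (\<Sum>i<k. l ^ i)" by simp
  then have "real k * l ^ k * (1 - l) \<le> (\<Sum>i<k. l ^ i) * (1 - l)"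
    using assms by (intro mult_right_mono) auto
  also have "(\<Sum>i<k. l ^ i) * (1 - l) = 1 - l ^ k"
    by (simp add: sum_gp_strict) 
  finally have *: "real k * l ^ k * (1 - l) \<le> 1 - l ^ k" .
  have "l ^ k < 1" using assms by (simp add: power_less_one_iff)
  then show ?thesis using * assms by (simp add: field_simps)
qed

lemma Q_bound:
  fixes l :: real assumes l: "0 < l" "l < 1"
  shows "exp (- (pi\<^sup>2 / 4) / (1 - l)) \<le> (\<Prod>m\<in>{1..N}. (1 - l^m) / (1 + l^m))"
proof -
  define x where "x m = (1 - l^m) / (1 + l^m)" for m :: nat
  have tl: "0 < l^m \<and> l^m < 1" if "m \<in> {1..N}" for m
    using that l by (auto simp: power_less_one_iff)
  have xpos: "0 < x m" if "m \<in> {1..N}" for m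
    using tl[OF that] by (simp add: x_def)
  have ser: "(\<lambda>n. 2 * (l^m) ^ (2*n+1) / real (2*n+1)) sums (- ln (x m))"
    if "m \<in> {1..N}" for m
  proof -
    have q: "(\<lambda>n. (2*((x m - 1) / (x m + 1)) ^ (2*n+1) / of_nat (2*n+1))) sums ln (x m)"
      by (rule ln_series_quadratic[OF xpos[OF that]])
    have "(x m - 1) / (x m + 1) = - (l^m)"
      using tl[OF that] by (simp add: x_def field_simps)
    then have "(\<lambda>n. - (2 * (l^m) ^ (2*n+1) / real (2*n+1))) sums ln (x m)"
      using q by (simp add: power_minus_odd)
    from sums_minus[OF this] show ?thesis by simp
  qed
  have S: "(\<lambda>n. \<Sum>m\<in>{1..N}. 2 * (l^m) ^ (2*n+1) / real (2*n+1)) sums (\<Sum>m\<in>{1..N}. - ln (x m))"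
    by (rule sums_sum) (rule ser)
  have B: "(\<lambda>n. 2 / (1 - l) * (1 / (2 * real n + 1)\<^sup>2)) sums (2 / (1 - l) * (pi\<^sup>2 / 8))"
    by (rule sums_mult[OF odd_sq_sums])
  have le: "(\<Sum>m\<in>{1..N}. 2 * (l^m) ^ (2*n+1) / real (2*n+1)) \<le> 2 / (1 - l) * (1 / (2 * real n + 1)\<^sup>2)" for n
  proof -
    define k where "k = 2*n+1"
    have k0: "0 < k" by (simp add: k_def)
    have lk: "0 < l^k" "l^k < 1" using l k0 by (auto simp: power_less_one_iff)
    have "(\<Sum>m\<in>{1..N}. 2 * (l^m) ^ k / real k) = 2 / real k * (\<Sum>m\<in>{1..N}. (l^k) ^ m)"
      by (simp add: sum_distrib_left power_mult[symmetric] mult.commute)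
    also have "\<dots> \<le> 2 / real k * (l^k / (1 - l^k))"
      using geom_bound[of "l^k" N] lk by (intro mult_left_mono) auto
    also have "\<dots> \<le> 2 / real k * (1 / (real k * (1 - l)))"
      using pow_bound[OF l k0] by (intro mult_left_mono) auto
    also have "\<dots> = 2 / (1 - l) * (1 / (2 * real n + 1)\<^sup>2)"
      by (simp add: k_def power2_eq_square add.commute)
    finally show ?thesis by (simp add: k_def)
  qed
  have sb: "(\<Sum>m\<in>{1..N}. - ln (x m)) \<le> 2 / (1 - l) * (pi\<^sup>2 / 8)"
    by (rule sums_le[OF le S B])
  have lnQ: "- (pi\<^sup>2 / 4) / (1 - l) \<le> ln (\<Prod>m\<in>{1..N}. x m)"
  proof -
    have "ln (\<Prod>m\<in>{1..N}. x m) = (\<Sum>m\<in>{1..N}. ln (x m))"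
      by (rule ln_prod) (use xpos in force)+
    then show ?thesis using sb l by (simp add: sum_negf field_simps)
  qed
  have "0 < (\<Prod>m\<in>{1..N}. x m)" by (rule prod_pos) (use xpos in blast)
  then have "exp (- (pi\<^sup>2 / 4) / (1 - l)) \<le> (\<Prod>m\<in>{1..N}. x m)"
    using lnQ by (metis exp_le_cancel_iff exp_ln)
  then show ?thesis by (simp add: x_def)
qed

lemma r_bounds:
  fixes l :: real assumes l: "0 < l" "l < 1"
  shows "0 \<le> (1 - l^m) / (1 + l^m)" "(1 - l^m) / (1 + l^m) \<le> 1"
proof -
  have "0 < l^m" "l^m \<le> 1" using l by (auto simp: power_le_one)
  then show "0 \<le> (1 - l^m) / (1 + l^m)" "(1 - l^m) / (1 + l^m) \<le> 1" by auto
qed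

lemma prod_sub:
  fixes l :: real assumes l: "0 < l" "l < 1"
    and A: "finite A" "inj_on g A" "g ` A \<subseteq> {1..N}"
  shows "(\<Prod>m\<in>{1..N}. (1 - l^m) / (1 + l^m)) \<le> (\<Prod>x\<in>A. (1 - l^(g x)) / (1 + l^(g x)))"
proof -
  define r where "r m = (1 - l^m) / (1 + l^m)" for m :: nat
  have rb: "0 \<le> r m" "r m \<le> 1" for m unfolding r_def using r_bounds[OF l] by auto
  have h1: "(\<Prod>x\<in>A. r (g x)) = (\<Prod>m\<in>g`A. r m)"
    using prod.reindex[OF A(2), of r] by simp
  have h2: "(\<Prod>m\<in>{1..N}. r m) = (\<Prod>m\<in>{1..N} - g`A. r m) * (\<Prod>m\<in>g`A. r m)"
    by (rule prod.subset_diff[OF A(3)]) simp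
  have h3: "(\<Prod>m\<in>{1..N} - g`A. r m) \<le> 1"
    by (rule prod_le_1) (simp add: rb)
  have h3': "0 \<le> (\<Prod>m\<in>{1..N} - g`A. r m)"
    by (rule prod_nonneg) (simp add: rb)
  have h4: "0 \<le> (\<Prod>m\<in>g`A. r m)"
    by (rule prod_nonneg) (simp add: rb)
  have "(\<Prod>m\<in>{1..N}. r m) \<le> (\<Prod>x\<in>A. r (g x))"
    unfolding h1 h2 by (rule mult_left_le_one_le[OF h4 h3' h3])
  then show ?thesis by (simp add: r_def)
qed

lemma pd:
  fixes l :: real assumes l: "0 < l" "l < 1"
  shows "pdist (complex_of_real ((1 - l ^ Suc j) / (1 + l ^ Suc j)))
               (complex_of_real ((1 - l ^ Suc k) / (1 + l ^ Suc k)))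
         = (1 - l ^ (if j \<le> k then k - j else j - k)) / (1 + l ^ (if j \<le> k then k - j else j - k))"
proof -
  define a where "a = l ^ Suc j"
  define b where "b = l ^ Suc k"
  have a: "0 < a" and b: "0 < b" using l by (auto simp: a_def b_def)
  define x where "x = (1 - a) / (1 + a)"
  define y where "y = (1 - b) / (1 + b)"
  have e: "(x - y) / (1 - y * x) = (b - a) / (a + b)"
  proof -
    have d: "(1 + a) * (1 + b) \<noteq> 0" using a b by simp
    have 1: "x - y = 2 * (b - a) / ((1 + a) * (1 + b))"
      using a b unfolding x_def y_def by (simp add: divide_simps add_pos_pos) (simp add: algebra_simps)
    have 2: "1 - y * x = 2 * (a + b) / ((1 + a) * (1 + b))"
      using a b unfolding x_def y_def by (simp add: divide_simps add_pos_pos) (simp add: algebra_simps)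
    show ?thesis unfolding 1 2 using a b by (simp add: divide_simps add_pos_pos) (simp add: algebra_simps)
  qed
  have "pdist (complex_of_real x) (complex_of_real y) = \<bar>(x - y) / (1 - y * x)\<bar>"
  proof -
    have *: "(complex_of_real x - complex_of_real y) / (1 - cnj (complex_of_real y) * complex_of_real x)
        = complex_of_real ((x - y) / (1 - y * x))" by simp
    show ?thesis unfolding pdist_def * by (rule norm_of_real)
  qed
  also have "\<dots> = \<bar>(b - a) / (a + b)\<bar>" by (simp add: e)
  also have "\<dots> = (1 - l ^ (if j \<le> k then k - j else j - k)) / (1 + l ^ (if j \<le> k then k - j else j - k))"
  proof (cases "j \<le> k")
    case True
    define t where "t = l^(k-j)"
    have "b = a * t" unfolding a_def b_def t_def using True
      by (simp add: power_add[symmetric])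
    moreover have "t \<le> 1" "0 < t" using l by (auto simp: power_le_one t_def)
    ultimately have "(b - a) / (a + b) = - ((1 - t) / (1 + t))"
    proof -
      assume bt: "b = a * t"
      have "(b - a) / (a + b) = (a * (t - 1)) / (a * (1 + t))" unfolding bt by (simp add: algebra_simps)
      also have "\<dots> = (t - 1) / (1 + t)" using a by simp
      finally show ?thesis by (simp add: minus_divide_left)
    qed
    moreover have "0 \<le> (1 - t) / (1 + t)" using \<open>t \<le> 1\<close> \<open>0 < t\<close> by simp
    ultimately have h: "\<bar>(b - a) / (a + b)\<bar> = (1 - t) / (1 + t)" by (metis abs_minus_cancel abs_of_nonneg)
    have "(if j \<le> k then k - j else j - k) = k - j" using True by simp
    then show ?thesis unfolding h t_def by (simp only:)
  next
    case False
    define t where "t = l^(j-k)"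
    have "a = b * t" unfolding a_def b_def t_def using False
      by (simp add: power_add[symmetric])
    moreover have "t \<le> 1" "0 < t" using l by (auto simp: power_le_one t_def)
    ultimately have "(b - a) / (a + b) = (1 - t) / (1 + t)"
    proof -
      assume at: "a = b * t"
      have "(b - a) / (a + b) = (b * (1 - t)) / (b * (1 + t))" unfolding at by (simp add: algebra_simps)
      also have "\<dots> = (1 - t) / (1 + t)" using b by simp
      finally show ?thesis .
    qed
    moreover have "0 \<le> (1 - t) / (1 + t)" using \<open>t \<le> 1\<close> \<open>0 < t\<close> by simp
    ultimately have h: "\<bar>(b - a) / (a + b)\<bar> = (1 - t) / (1 + t)" by (metis abs_of_nonneg)
    have "(if j \<le> k then k - j else j - k) = j - k" using False by simp
    then show ?thesis unfolding h t_def by (simp only:)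
  qed
  finally show ?thesis by (simp add: x_def y_def a_def b_def)
qed

theorem lemma6p3:
  fixes l :: real
  assumes "0 < l" and "l < 1"
  shows "sep_const (\<lambda>j. complex_of_real ((1 - l ^ Suc j) / (1 + l ^ Suc j)))
           \<ge> exp (- (pi\<^sup>2 / 2) / (1 - l))"
proof -
  have l: "0 < l" "l < 1" using assms by auto
  define c where "c = exp (- (pi\<^sup>2 / 2) / (1 - l))"
  define c' where "c' = exp (- (pi\<^sup>2 / 4) / (1 - l))"
  have cc: "c = c' * c'" unfolding c_def c'_def exp_add[symmetric]
    by (rule arg_cong[where f = exp]) (simp only: add_divide_distrib[symmetric], simp)
  define z where "z j = complex_of_real ((1 - l ^ Suc j) / (1 + l ^ Suc j))" for j
  define r where "r m = (1 - l^m) / (1 + l^m)" for m :: nat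
  define P where "P j n = (\<Prod>k\<in>{..<n}-{j}. pdist (z j) (z k))" for j n
  have pdz: "pdist (z j) (z k) = r (if j \<le> k then k - j else j - k)" for j k
    unfolding z_def r_def by (rule pd[OF l])
  have Pbound: "c \<le> P j n" for j n
  proof -
    let ?A1 = "{k. k < n \<and> k < j}" and ?A2 = "{k. k < n \<and> j < k}"
    have split: "{..<n} - {j} = ?A1 \<union> ?A2" by auto
    have "P j n = (\<Prod>k\<in>?A1. pdist (z j) (z k)) * (\<Prod>k\<in>?A2. pdist (z j) (z k))"
      unfolding P_def split by (rule prod.union_disjoint) auto
    also have "(\<Prod>k\<in>?A1. pdist (z j) (z k)) = (\<Prod>k\<in>?A1. r (j - k))"
      by (rule prod.cong) (auto simp: pdz)
    also have "(\<Prod>k\<in>?A2. pdist (z j) (z k)) = (\<Prod>k\<in>?A2. r (k - j))"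
      by (rule prod.cong) (auto simp: pdz)
    finally have Pe: "P j n = (\<Prod>k\<in>?A1. r (j - k)) * (\<Prod>k\<in>?A2. r (k - j))" .
    have c'Q: "c' \<le> (\<Prod>m\<in>{1..n+j}. r m)" unfolding c'_def r_def by (rule Q_bound[OF l])
    have i1: "inj_on (\<lambda>k. j - k) ?A1" by (auto simp: inj_on_def)
    have i2: "inj_on (\<lambda>k. k - j) ?A2" by (auto simp: inj_on_def)
    have s1: "(\<Prod>m\<in>{1..n+j}. r m) \<le> (\<Prod>k\<in>?A1. r (j - k))"
      unfolding r_def by (rule prod_sub[OF l _ i1]) auto
    have s2: "(\<Prod>m\<in>{1..n+j}. r m) \<le> (\<Prod>k\<in>?A2. r (k - j))"
      unfolding r_def by (rule prod_sub[OF l _ i2]) auto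
    have c'0: "0 \<le> c'" by (simp add: c'_def)
    have "c' * c' \<le> (\<Prod>k\<in>?A1. r (j - k)) * (\<Prod>k\<in>?A2. r (k - j))"
      by (rule mult_mono) (use c'Q s1 s2 c'0 in auto)
    then show ?thesis using Pe cc by simp
  qed
  have rb: "0 \<le> r m" "r m \<le> 1" for m unfolding r_def using r_bounds[OF l] by auto
  have P0: "0 \<le> P j n" for j n unfolding P_def by (rule prod_nonneg) (simp add: pdist_def)
  have dec: "decseq (P j)" for j
  proof (rule decseq_SucI)
    fix n
    show "P j (Suc n) \<le> P j n"
    proof (cases "n = j")
      case True
      then have "{..<Suc n} - {j} = {..<n} - {j}" by auto
      then show ?thesis by (simp add: P_def)
    next
      case False
      then have "{..<Suc n} - {j} = insert n ({..<n} - {j})" by auto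
      then have "P j (Suc n) = pdist (z j) (z n) * P j n" by (simp add: P_def)
      moreover have "pdist (z j) (z n) \<le> 1" by (simp add: pdz rb)
      moreover have "0 \<le> pdist (z j) (z n)" by (simp add: pdist_def)
      ultimately show ?thesis using P0[of j n] by (metis mult_left_le_one_le)
    qed
  qed
  have "c \<le> sep_prod z j" for j
  proof -
    obtain L where L: "P j \<longlonglongrightarrow> L" "\<forall>i. L \<le> P j i"
      by (rule decseq_convergent[OF dec, of c]) (use Pbound in auto)
    have "sep_prod z j = lim (P j)" unfolding sep_prod_def P_def by simp
    also have "\<dots> = L" using L(1) by (rule limI)
    finally have "sep_prod z j = L" .
    moreover have "c \<le> L" by (rule LIMSEQ_le_const[OF L(1)]) (use Pbound in auto)
    ultimately show ?thesis by simp
  qed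
  then have "c \<le> sep_const z" unfolding sep_const_def by (intro cINF_greatest) auto
  then show ?thesis unfolding c_def z_def by simp
qed

end
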